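(* Let $r\in\mathbb{N}$ and $w,v\in\mathbb{YF}^r$. Then $$d_r(w,v)=\sum_{l=0}^{h(w,v)} d_1(s(w),s(v),l)\cdot r^{\#v-\#w-e(v[l])}.$$
   Context: Fix $r\in\mathbb{N}$. Words and statistics. Consider finite words over $\{1_1,\dots,1_r,2\}$. A letter $1_i$ is a one with digit value $1$; $2$ is a two with digit value $2$. $|x|$ is the sum of digit values, $\#x$ the number of letters, $e(x)$ the number of ones. The graph $\mathbb{YF}^r$. It is the graded graph on all finite words, graded by $|\cdot|$. From $x$ there is a downward edge to every word obtained by one of two operations: (i) delete the leftmost one; (ii) replace a $2$ lying left of the leftmost one (any $2$ if there are no ones) by $1_i$, with arbitrary $i$. $\mathbb{YF}=\mathbb{YF}^1$ (with $1:=1_1$). The map $s$ replaces every $1_i$ by $1$. Path counts. $d_r(x,y)$ is the number of downward paths $y=y_n\to\dots\to y_m=x$ with $|y_i|=i$. Suffix notation. $h(w,v)$ is the number of letters of the longest common suffix of $w,v$; $1_i\neq1_j$ for $i\ne j$. $x[l]$ is $x$ with its last $l$ letters deleted. The restricted path count $d_1(x,y,l)$. For $x,y\in\mathbb{YF}$ with common suffix $u$ of $l$ letters, $d_1(x,y,l)$ is the number of downward paths $y=y_nu\to\dots\to y_mu=x$ in $\mathbb{YF}$ with $|y_i|=i$ such that the words $y_i$ do not all end with the same letter. *)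

theory Defs
  imports Main
begin

text \<open>Letters: One i stands for the one 1_i (digit value 1), Two for the two (digit value 2).
  The alphabet of YF^r is {1_1,...,1_r,2}, i.e. One i with 1 \<le> i \<le> r, and Two.\<close>
datatype letter = One nat | Two

type_synonym word = "letter list"

definition YF :: "nat \<Rightarrow> word set" where
  "YF r = {x. \<forall>i. One i \<in> set x \<longrightarrow> 1 \<le> i \<and> i \<le> r}"

fun val :: "letter \<Rightarrow> nat" where
  "val (One i) = 1"
| "val Two = 2"

definition weight :: "word \<Rightarrow> nat" where
  "weight x = sum_list (map val x)"

fun is_one :: "letter \<Rightarrow> bool" where
  "is_one (One i) = True"
| "is_one Two = False"

definition e :: "word \<Rightarrow> nat" where
  "e x = length (filter is_one x)"

fun sl :: "letter \<Rightarrow> letter" where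
  "sl (One i) = One 1"
| "sl Two = Two"

definition s :: "word \<Rightarrow> word" where
  "s x = map sl x"

text \<open>Downward edges of YF^r: down r x y means there is an edge from x down to y.
  (i) delete the leftmost one; (ii) replace a 2 lying left of the leftmost one
  (i.e. with only 2s before it) by some 1_k, 1 \<le> k \<le> r.\<close>
definition down :: "nat \<Rightarrow> word \<Rightarrow> word \<Rightarrow> bool" where
  "down r x y \<longleftrightarrow>
     (\<exists>p i q. x = p @ One i # q \<and> (\<forall>a\<in>set p. a = Two) \<and> y = p @ q)
   \<or> (\<exists>p q k. x = p @ Two # q \<and> (\<forall>a\<in>set p. a = Two) \<and> 1 \<le> k \<and> k \<le> r
              \<and> y = p @ One k # q)"

definition is_path :: "nat \<Rightarrow> word \<Rightarrow> word \<Rightarrow> word list \<Rightarrow> bool" where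
  "is_path r x y ps \<longleftrightarrow> ps \<noteq> [] \<and> hd ps = y \<and> last ps = x
     \<and> (\<forall>j < length ps. weight (ps ! j) + j = weight y)
     \<and> (\<forall>j. Suc j < length ps \<longrightarrow> down r (ps ! j) (ps ! Suc j))"

definition d :: "nat \<Rightarrow> word \<Rightarrow> word \<Rightarrow> nat" where
  "d r x y = card {ps. is_path r x y ps}"

fun lcp :: "'a list \<Rightarrow> 'a list \<Rightarrow> nat" where
  "lcp (a # as) (b # bs) = (if a = b then Suc (lcp as bs) else 0)"
| "lcp _ _ = 0"

definition h :: "word \<Rightarrow> word \<Rightarrow> nat" where
  "h w v = lcp (rev w) (rev v)"

definition cut :: "word \<Rightarrow> nat \<Rightarrow> word" where
  "cut x l = take (length x - l) x"

text \<open>d_1(x,y,l): paths y = y_n u \<rightarrow> ... \<rightarrow> y_m u = x in YF (= YF^1), u the common suffix of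
  l letters (the last l letters of x), such that the words y_i do not all end with the same
  letter.\<close>
definition d1 :: "word \<Rightarrow> word \<Rightarrow> nat \<Rightarrow> nat" where
  "d1 x y l = card {ps. is_path 1 x y ps
      \<and> (\<forall>z\<in>set ps. \<exists>q. z = q @ drop (length x - l) x)
      \<and> \<not> (\<exists>c. \<forall>z\<in>set ps. \<exists>q. z = q @ [c] @ drop (length x - l) x)}"

end

theory Submission
  imports Defs
begin

fun chain :: "nat \<Rightarrow> word list \<Rightarrow> bool" where
  "chain r (x # y # ps) = (down r x y \<and> chain r (y # ps))"
| "chain r _ = True"

lemma chain_nth: "chain r ps \<longleftrightarrow> (\<forall>j. Suc j < length ps \<longrightarrow> down r (ps!j) (ps!Suc j))"
proof (induction r ps rule: chain.induct)
  case (1 r x y ps)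
  show ?case
  proof
    assume "chain r (x # y # ps)"
    then show "\<forall>j. Suc j < length (x # y # ps) \<longrightarrow> down r ((x # y # ps) ! j) ((x # y # ps) ! Suc j)"
      using 1 by (auto simp: nth_Cons split: nat.splits)
  next
    assume H: "\<forall>j. Suc j < length (x # y # ps) \<longrightarrow> down r ((x # y # ps) ! j) ((x # y # ps) ! Suc j)"
    have "down r x y" using H[rule_format, of 0] by simp
    moreover have "chain r (y # ps)" using 1 H[rule_format, of "Suc _"] by auto
    ultimately show "chain r (x # y # ps)" by simp
  qed
qed (auto simp: less_Suc_eq)

lemma weight_append[simp]: "weight (a @ b) = weight a + weight b"
  by (simp add: weight_def)
lemma weight_Cons[simp]: "weight (c # b) = val c + weight b"
  by (simp add: weight_def)

lemma down_weight: "down r x y \<Longrightarrow> weight x = Suc (weight y)"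
  by (auto simp: down_def)

lemma chain_weight: "chain r ps \<Longrightarrow> j < length ps \<Longrightarrow> weight (ps!j) + j = weight (hd ps)"
proof (induction r ps arbitrary: j rule: chain.induct)
  case (1 r x y ps)
  then show ?case
    by (cases j) (auto dest: down_weight)
qed auto

lemma is_path_iff: "is_path r x y ps \<longleftrightarrow> ps \<noteq> [] \<and> hd ps = y \<and> last ps = x \<and> chain r ps"
  unfolding is_path_def chain_nth
  using chain_weight chain_nth by (metis hd_conv_nth length_greater_0_conv)

lemma down_len: "down r x y \<Longrightarrow> length y \<le> length x"
  by (auto simp: down_def)
lemma down_set: "down r x y \<Longrightarrow> set y \<subseteq> set x \<union> One ` {1..r}"
  by (auto simp: down_def)

lemma chain_elems: "chain r ps \<Longrightarrow> ps \<noteq> [] \<Longrightarrow> z \<in> set ps \<Longrightarrow>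
   length z \<le> length (hd ps) \<and> set z \<subseteq> set (hd ps) \<union> One ` {1..r}"
proof (induction r ps rule: chain.induct)
  case (1 r x y ps)
  then show ?case using down_len[of r x y] down_set[of r x y] by fastforce
qed auto

lemma chain_length: "chain r ps \<Longrightarrow> ps \<noteq> [] \<Longrightarrow> length ps \<le> Suc (weight (hd ps))"
  using chain_weight[of r ps "length ps - 1"] by simp

lemma finite_paths: "finite {ps. chain r ps \<and> ps \<noteq> [] \<and> hd ps = v}"
proof -
  let ?W = "{z. set z \<subseteq> set v \<union> One ` {1..r} \<and> length z \<le> length v}"
  have fW: "finite ?W" using finite_lists_length_le[of "set v \<union> One ` {1..r}" "length v"] by simp
  have "{ps. chain r ps \<and> ps \<noteq> [] \<and> hd ps = v} \<subseteq> {ps. set ps \<subseteq> ?W \<and> length ps \<le> Suc (weight v)}"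
    using chain_elems chain_length by blast
  then show ?thesis using finite_lists_length_le[OF fW] finite_subset by blast
qed

lemma lcp_le1: "lcp xs ys \<le> length xs"
  by (induction xs ys rule: lcp.induct) auto
lemma lcp_le2: "lcp xs ys \<le> length ys"
  by (induction xs ys rule: lcp.induct) auto

lemma lcp_ge_iff: "n \<le> lcp xs ys \<longleftrightarrow> n \<le> length xs \<and> n \<le> length ys \<and> take n xs = take n ys"
proof (induction xs ys arbitrary: n rule: lcp.induct)
  case (1 a as b bs)
  then show ?case by (cases n) auto
qed auto

lemma h_ge_iff: "n \<le> h x y \<longleftrightarrow> n \<le> length x \<and> n \<le> length y \<and> take n (rev x) = take n (rev y)"
  unfolding h_def lcp_ge_iff by simp

lemma h_le1: "h x y \<le> length x" unfolding h_def using lcp_le1 by (metis length_rev)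
lemma h_le2: "h x y \<le> length y" unfolding h_def using lcp_le2 by (metis length_rev)

lemma lcp_append: "lcp (xs @ ys) (xs @ zs) = length xs + lcp ys zs"
  by (induction xs) auto

lemma h_append: "h (a @ q) (b @ q) = length q + h a b"
  unfolding h_def by (simp add: lcp_append)

lemma allTwo_rev_hd: "\<forall>a\<in>set p. a = Two \<Longrightarrow> lcp (One i # xs) (rev p) = 0"
  by (cases "rev p") (auto dest: arg_cong[where f=set])

lemma h_step1: "\<forall>a\<in>set p. a = Two \<Longrightarrow> h (p @ One i # q) (p @ q) = length q"
proof -
  assume a: "\<forall>a\<in>set p. a = Two"
  have "h (p @ One i # q) (p @ q) = h ((p @ [One i]) @ q) (p @ q)" by simp
  also have "\<dots> = length q + h (p @ [One i]) p" by (rule h_append)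
  also have "h (p @ [One i]) p = 0" unfolding h_def using allTwo_rev_hd[OF a] by simp
  finally show ?thesis by simp
qed

lemma h_step2: "h (p @ Two # q) (p @ One k # q) = length q"
proof -
  have "h (p @ Two # q) (p @ One k # q) = h ((p @ [Two]) @ q) ((p @ [One k]) @ q)" by simp
  also have "\<dots> = length q + h (p @ [Two]) (p @ [One k])" by (rule h_append)
  also have "h (p @ [Two]) (p @ [One k]) = 0" unfolding h_def by simp
  finally show ?thesis by simp
qed

lemma h_refl: "h x x = length x"
  using h_ge_iff[of "length x" x x] h_le1[of x x] by simp

fun C :: "word list \<Rightarrow> nat" where
  "C [] = 0"
| "C [x] = length x"
| "C (x # y # ps) = min (h x y) (C (y # ps))"

lemma suffix_drop: "(\<exists>q. x = q @ u) \<longleftrightarrow> length u \<le> length x \<and> take (length u) (rev x) = rev u"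
proof
  assume "\<exists>q. x = q @ u" then show "length u \<le> length x \<and> take (length u) (rev x) = rev u" by auto
next
  assume A: "length u \<le> length x \<and> take (length u) (rev x) = rev u"
  have "x = rev (rev x)" by simp
  also have "rev x = take (length u) (rev x) @ drop (length u) (rev x)" by simp
  finally have "x = rev (drop (length u) (rev x)) @ u" using A by simp
  then show "\<exists>q. x = q @ u" by blast
qed

lemma suffix_h: "y = q' @ u \<Longrightarrow> (\<exists>q. x = q @ u) \<longleftrightarrow> length u \<le> h x y"
  unfolding h_ge_iff suffix_drop by auto

lemma C_suffix: "ps \<noteq> [] \<Longrightarrow> last ps = q0 @ u \<Longrightarrow> (\<forall>z\<in>set ps. \<exists>q. z = q @ u) \<longleftrightarrow> length u \<le> C ps"
proof (induction ps rule: C.induct)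
  case (3 x y ps)
  then have IH: "(\<forall>z\<in>set (y#ps). \<exists>q. z = q @ u) \<longleftrightarrow> length u \<le> C (y#ps)" by simp
  show ?case
  proof
    assume A: "\<forall>z\<in>set (x # y # ps). \<exists>q. z = q @ u"
    then obtain q' where "y = q' @ u" by auto
    then have "length u \<le> h x y" using A suffix_h by auto
    then show "length u \<le> C (x # y # ps)" using A IH by auto
  next
    assume A: "length u \<le> C (x # y # ps)"
    then have B: "\<forall>z\<in>set (y#ps). \<exists>q. z = q @ u" using IH by simp
    then obtain q' where "y = q' @ u" by auto
    then have "\<exists>q. x = q @ u" using A suffix_h by auto
    then show "\<forall>z\<in>set (x # y # ps). \<exists>q. z = q @ u" using B by auto
  qed
qed auto

lemma C_le_last: "ps \<noteq> [] \<Longrightarrow> C ps \<le> length (last ps)"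
  by (induction ps rule: C.induct) auto

lemma C_h: "ps \<noteq> [] \<Longrightarrow> C ps \<le> h (last ps) (hd ps)"
proof -
  assume ne: "ps \<noteq> []"
  define u where "u = drop (length (last ps) - C ps) (last ps)"
  have lu: "length u = C ps" using C_le_last[OF ne] by (simp add: u_def)
  have "last ps = take (length (last ps) - C ps) (last ps) @ u" by (simp add: u_def)
  then have "\<forall>z\<in>set ps. \<exists>q. z = q @ u" using C_suffix[OF ne, of _ u] lu by simp
  then obtain q where hq: "hd ps = q @ u" using hd_in_set[OF ne] by blast
  have "last ps = take (length (last ps) - C ps) (last ps) @ u" by (simp add: u_def)
  then have "length u \<le> h (last ps) (hd ps)" using suffix_h[OF hq, of "last ps"] by blast
  then show ?thesis using lu by simp
qed

lemma s_append[simp]: "s (a @ b) = s a @ s b" by (simp add: s_def)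
lemma s_Cons[simp]: "s (c # b) = sl c # s b" by (simp add: s_def)
lemma s_Nil[simp]: "s [] = []" by (simp add: s_def)
lemma s_len[simp]: "length (s x) = length x" by (simp add: s_def)
lemma s_take: "s (take n x) = take n (s x)" by (simp add: s_def take_map)
lemma s_rev: "s (rev x) = rev (s x)" by (simp add: s_def rev_map)
lemma s_two: "\<forall>a\<in>set p. a = Two \<Longrightarrow> s p = p" by (induction p) auto

lemma e_append[simp]: "e (a @ b) = e a + e b" by (simp add: e_def)
lemma e_Nil[simp]: "e [] = 0" by (simp add: e_def)
lemma e_One[simp]: "e (One i # b) = Suc (e b)" by (simp add: e_def)
lemma e_Two[simp]: "e (Two # b) = e b" by (simp add: e_def)
lemma e_two: "\<forall>a\<in>set p. a = Two \<Longrightarrow> e p = 0" by (induction p) auto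
lemma e_take_two: "\<forall>a\<in>set p. a = Two \<Longrightarrow> e (take n p) = 0"
  by (rule e_two) (auto dest: in_set_takeD)
lemma e_s: "e (s x) = e x" by (induction x) (auto, case_tac a, auto)

lemma sl_Two: "sl c = Two \<longleftrightarrow> c = Two" by (cases c) auto
lemma sl_One: "sl c = One i \<Longrightarrow> \<exists>j. c = One j" by (cases c) auto

lemma map_sl_Two: "s xs = ys \<Longrightarrow> \<forall>y\<in>set ys. y = Two \<Longrightarrow> xs = ys"
  by (induction xs arbitrary: ys) (auto simp: sl_Two)

lemma s_decomp: "s v = p @ c # q \<Longrightarrow> \<exists>p0 c0 q0. v = p0 @ c0 # q0 \<and> s p0 = p \<and> sl c0 = c \<and> s q0 = q"
  unfolding s_def by (auto simp: map_eq_append_conv)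

lemma leading_unique: "p @ One i # q = p2 @ One i2 # q2 \<Longrightarrow> \<forall>a\<in>set p. a = Two \<Longrightarrow> \<forall>a\<in>set p2. a = Two
  \<Longrightarrow> p = p2 \<and> i = i2 \<and> q = q2"
proof (induction p arbitrary: p2)
  case Nil then show ?case by (cases p2) auto
next
  case (Cons a p) then show ?case by (cases p2) auto
qed

lemma down_s: "down r x y \<Longrightarrow> down 1 (s x) (s y)"
  unfolding down_def
  apply (elim disjE exE conjE)
   apply (rule disjI1) apply (rule_tac x="s p" in exI, rule_tac x=1 in exI, rule_tac x="s q" in exI)
   apply (simp add: s_two)
  apply (rule disjI2) apply (rule_tac x="s p" in exI, rule_tac x="s q" in exI, rule_tac x=1 in exI)
  apply (simp add: s_two)
  done

lemma chain_s: "chain r ps \<Longrightarrow> chain 1 (map s ps)"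
  by (induction r ps rule: chain.induct) (auto dest: down_s)

lemma take_pre: "length p \<le> n \<Longrightarrow> take n (p @ xs) = p @ take (n - length p) xs" by simp

lemma e_bound: "chain r P \<Longrightarrow> P \<noteq> [] \<Longrightarrow> length (last P) + e (take (length (hd P) - C P) (hd P)) \<le> length (hd P)"
proof (induction r P rule: chain.induct)
  case (1 r x y ps)
  then have d: "down r x y" and IH: "length (last (y#ps)) + e (take (length y - C (y#ps)) y) \<le> length y" by auto
  let ?C = "C (y#ps)"
  have Cle: "?C \<le> length y" using C_h[of "y#ps"] h_le2 by (metis list.sel(1) list.simps(3) order_trans)
  from d show ?case unfolding down_def
  proof (elim disjE exE conjE)
    fix p i q assume p: "\<forall>a\<in>set p. a = Two" and x: "x = p @ One i # q" and y: "y = p @ q"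
    have "h x y = length q" using h_step1[OF p] x y by simp
    then have hC: "C (x # y # ps) = min (length q) ?C" by (simp only: C.simps)
    show ?thesis
    proof (cases "?C \<le> length q")
      case True
      have "take (length x - ?C) x = p @ One i # take (length q - ?C) q"
        using True x by (simp add: take_pre Suc_diff_le)
      moreover have "take (length y - ?C) y = p @ take (length q - ?C) q"
        using True y by (simp add: take_pre)
      ultimately show ?thesis using IH hC True x y e_two[OF p] by simp
    next
      case False
      have "take (length x - length q) x = p @ [One i]" using x by simp
      then show ?thesis using IH hC False x y e_two[OF p] by simp
    qed
  next
    fix p q k assume p: "\<forall>a\<in>set p. a = Two" and x: "x = p @ Two # q" and y: "y = p @ One k # q"
    have "h x y = length q" using h_step2 x y by simp
    then have hC: "C (x # y # ps) = min (length q) ?C" by (simp only: C.simps)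
    show ?thesis
    proof (cases "?C \<le> length q")
      case True
      have "take (length x - ?C) x = p @ Two # take (length q - ?C) q"
        using True x by (simp add: take_pre Suc_diff_le)
      moreover have "take (length y - ?C) y = p @ One k # take (length q - ?C) q"
        using True y by (simp add: take_pre Suc_diff_le)
      ultimately show ?thesis using IH hC True x y e_two[OF p] by simp
    next
      case False
      have "take (length x - length q) x = p @ [Two]" using x by simp
      then show ?thesis using IH hC False x y e_two[OF p] by simp
    qed
  qed
qed auto

lemma ext1:
  assumes p: "\<forall>a\<in>set p. a = Two" and m: "length q < m" and hs: "m \<le> h (s w) (s (p @ q))"
  shows "m \<le> h w (p @ q) \<longleftrightarrow> take (length q) (rev w) = rev q"
proof -
  let ?n = "length q"
  define T where "T = take m (rev w)"
  have lw: "m \<le> length w" and lv: "m \<le> length (p @ q)" using hs h_ge_iff by auto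
  have "take m (rev (s w)) = take m (rev (s (p @ q)))" using hs h_ge_iff by auto
  then have sT: "s T = rev (s q) @ take (m - ?n) (rev p)"
    using m by (simp add: T_def s_take s_rev s_two[OF p])
  have "s (drop ?n T) = take (m - ?n) (rev p)" using sT by (simp add: s_def drop_map[symmetric])
  then have dT: "drop ?n T = take (m - ?n) (rev p)"
    by (rule map_sl_Two) (use p in \<open>auto dest: in_set_takeD\<close>)
  have tT: "take ?n T = take ?n (rev w)" using m by (simp add: T_def)
  have "m \<le> h w (p @ q) \<longleftrightarrow> T = rev q @ take (m - ?n) (rev p)"
    using lw lv m by (simp add: h_ge_iff T_def)
  also have "\<dots> \<longleftrightarrow> take ?n T = rev q" using dT by (metis append_take_drop_id append_eq_conv_conj length_rev)
  finally show ?thesis using tT by simp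
qed

lemma ext2:
  assumes p: "\<forall>a\<in>set p. a = Two" and m: "length q < m" and hs: "m \<le> h (s w) (s (p @ One k' # q))"
  shows "\<exists>k0. One k0 \<in> set w \<and> (\<forall>k. m \<le> h w (p @ One k # q) \<longleftrightarrow> take (length q) (rev w) = rev q \<and> k = k0)"
proof -
  let ?n = "length q"
  define T where "T = take m (rev w)"
  have lw: "m \<le> length w" and lv: "m \<le> length (p @ One k' # q)" using hs h_ge_iff by auto
  have "take m (rev (s w)) = take m (rev (s (p @ One k' # q)))" using hs h_ge_iff by auto
  then have sT: "s T = rev (s q) @ One 1 # take (m - Suc ?n) (rev p)"
    using m by (simp add: T_def s_take s_rev s_two[OF p] take_Cons')
  have lT: "length T = m" using lw by (simp add: T_def)
  obtain c D where cD: "drop ?n T = c # D" using lT m by (cases "drop ?n T") auto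
  have "s (drop ?n T) = One 1 # take (m - Suc ?n) (rev p)" using sT by (simp add: s_def drop_map[symmetric])
  then have sc: "sl c = One 1" and sD: "s D = take (m - Suc ?n) (rev p)" using cD by auto
  have D: "D = take (m - Suc ?n) (rev p)"
    using sD by (rule map_sl_Two) (use p in \<open>auto dest: in_set_takeD\<close>)
  obtain k0 where c: "c = One k0" using sl_One[OF sc] by blast
  have "c \<in> set T" using cD by (metis in_set_dropD list.set_intros(1))
  then have cw: "One k0 \<in> set w" using c by (auto simp: T_def dest: in_set_takeD)
  have tT: "take ?n T = take ?n (rev w)" using m by (simp add: T_def)
  have "\<forall>k. m \<le> h w (p @ One k # q) \<longleftrightarrow> take (length q) (rev w) = rev q \<and> k = k0"
  proof
    fix k
    have "m \<le> h w (p @ One k # q) \<longleftrightarrow> T = rev q @ One k # take (m - Suc ?n) (rev p)"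
      using lw lv m by (simp add: h_ge_iff T_def take_Cons')
    also have "\<dots> \<longleftrightarrow> take ?n T @ One k0 # D = rev q @ One k # D"
      using cD c D by (metis append_take_drop_id)
    also have "\<dots> \<longleftrightarrow> take ?n T = rev q \<and> k = k0"
      using lT m by (subst append_eq_append_conv) auto
    finally show "m \<le> h w (p @ One k # q) \<longleftrightarrow> take (length q) (rev w) = rev q \<and> k = k0" using tT by simp
  qed
  then show ?thesis using cw by blast
qed

lemma take_mid: "y = p @ a # q \<Longrightarrow> c \<le> length q \<Longrightarrow> take (length y - c) y = p @ a # take (length q - c) q"
  by (simp add: take_pre Suc_diff_le)

definition fib :: "nat \<Rightarrow> word \<Rightarrow> word \<Rightarrow> word list \<Rightarrow> word list set" where
  "fib r w v P = {ps. chain r ps \<and> ps \<noteq> [] \<and> hd ps = v \<and> last ps = w \<and> map s ps = P}"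

lemma fib_finite: "finite (fib r w v P)"
proof (rule finite_subset[OF _ finite_paths[of r v]])
  show "fib r w v P \<subseteq> {ps. chain r ps \<and> ps \<noteq> [] \<and> hd ps = v}" unfolding fib_def by blast
qed

lemma fib_single: "fib r w v [x] = (if x = s v \<and> w = v then {[v]} else {})"
proof -
  have "ps \<in> fib r w v [x] \<longleftrightarrow> ps = [v] \<and> x = s v \<and> w = v" for ps
  proof
    assume "ps \<in> fib r w v [x]"
    then have "chain r ps" "hd ps = v" "last ps = w" "map s ps = [x]" unfolding fib_def by auto
    then show "ps = [v] \<and> x = s v \<and> w = v" by (cases ps) auto
  next
    assume "ps = [v] \<and> x = s v \<and> w = v"
    then show "ps \<in> fib r w v [x]" unfolding fib_def by simp
  qed
  then show ?thesis by auto
qed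

lemma fib_Cons: "x = s v \<Longrightarrow> fib r w v (x # y # ps) = (\<Union>v'\<in>{v'. down r v v' \<and> s v' = y}. Cons v ` fib r w v' (y # ps))"
proof (intro equalityI subsetI)
  fix zs assume zs: "zs \<in> fib r w v (x # y # ps)"
  then have m: "map s zs = x # y # ps" and ch: "chain r zs" and hz: "hd zs = v" and lz: "last zs = w"
    unfolding fib_def by auto
  obtain a rest1 where "zs = a # rest1" "map s rest1 = y # ps" using m by (cases zs) auto
  then obtain b rest where z: "zs = a # b # rest" and "s b = y" "map s rest = ps" by (cases rest1) auto
  then have a: "a = v" using hz by simp
  have "down r v b" "chain r (b # rest)" using ch z a by auto
  moreover have "b # rest \<in> fib r w b (y # ps)"
    unfolding fib_def using \<open>chain r (b # rest)\<close> lz z \<open>s b = y\<close> \<open>map s rest = ps\<close> by simp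
  ultimately show "zs \<in> (\<Union>v'\<in>{v'. down r v v' \<and> s v' = y}. Cons v ` fib r w v' (y # ps))"
    using z a \<open>s b = y\<close> by blast
next
  fix zs assume x: "x = s v" and "zs \<in> (\<Union>v'\<in>{v'. down r v v' \<and> s v' = y}. Cons v ` fib r w v' (y # ps))"
  then obtain v' zs' where d: "down r v v'" "s v' = y" and zs': "zs' \<in> fib r w v' (y # ps)" and z: "zs = v # zs'"
    by blast
  from zs' have "chain r zs'" "zs' \<noteq> []" "hd zs' = v'" "last zs' = w" "map s zs' = y # ps"
    unfolding fib_def by auto
  then obtain rest where "zs' = v' # rest" by (cases zs') auto
  then show "zs \<in> fib r w v (x # y # ps)"
    unfolding fib_def using z d x \<open>chain r zs'\<close> \<open>last zs' = w\<close> \<open>map s zs' = y # ps\<close> by simp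
qed

lemma card_fib_Cons: "finite V \<Longrightarrow> card (\<Union>v'\<in>V. Cons v ` fib r w v' P1) = (\<Sum>v'\<in>V. card (fib r w v' P1))"
proof -
  assume fV: "finite V"
  have disj: "\<forall>i\<in>V. \<forall>j\<in>V. i \<noteq> j \<longrightarrow> Cons v ` fib r w i P1 \<inter> Cons v ` fib r w j P1 = {}"
    unfolding fib_def by blast
  have "card (\<Union>v'\<in>V. Cons v ` fib r w v' P1) = (\<Sum>v'\<in>V. card (Cons v ` fib r w v' P1))"
    by (rule card_UN_disjoint[OF fV _ disj]) (simp add: fib_finite)
  also have "\<dots> = (\<Sum>v'\<in>V. card (fib r w v' P1))"
    by (rule sum.cong) (auto simp: card_image)
  finally show ?thesis .
qed

lemma fiber:
  "chain q P \<Longrightarrow> q = 1 \<Longrightarrow> P \<noteq> [] \<Longrightarrow> hd P = s v \<Longrightarrow> last P = s w \<Longrightarrow> w \<in> YF r \<Longrightarrow>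
   card (fib r w v P) = (if C P \<le> h w v then r ^ (length v - length w - e (take (length v - C P) v)) else 0)"
proof (induction q P arbitrary: v rule: chain.induct)
  case ("2_2" q x)
  then have sx: "x = s v" "x = s w" by auto
  then have lv: "length v = length w" by (metis s_len)
  show ?case
  proof (cases "w = v")
    case True then show ?thesis using sx by (simp add: fib_single h_refl)
  next
    case False
    have "\<not> length v \<le> h w v"
    proof
      assume "length v \<le> h w v"
      then have "take (length v) (rev w) = take (length v) (rev v)" by (simp add: h_ge_iff)
      then have "rev w = rev v" using lv by simp
      then show False using False by simp
    qed
    then show ?thesis using sx False by (simp add: fib_single)
  qed
next
  case (1 q x y ps)
  then have d: "down 1 x y" and ch: "chain 1 (y # ps)" and xv: "x = s v" and lw: "last (y#ps) = s w"
    and wY: "w \<in> YF r" by auto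
  have IH: "\<And>v. y = s v \<Longrightarrow> card (fib r w v (y # ps)) =
     (if C (y#ps) \<le> h w v then r ^ (length v - length w - e (take (length v - C (y#ps)) v)) else 0)"
    using 1 by auto
  let ?C = "C (y#ps)"
  have C1h: "?C \<le> h (s w) y" using C_h[of "y#ps"] lw by simp
  have C1w: "?C \<le> length w" using C_le_last[of "y#ps"] lw by simp
  have eb: "length w + e (take (length y - ?C) y) \<le> length y"
    using e_bound[OF ch] lw by simp
  have fibx: "fib r w v (x # y # ps) = (\<Union>v'\<in>{v'. down r v v' \<and> s v' = y}. Cons v ` fib r w v' (y # ps))"
    using fib_Cons[OF xv] .
  from d show ?case unfolding down_def
  proof (elim disjE exE conjE)
    fix p i q assume p: "\<forall>a\<in>set p. a = Two" and x: "x = p @ One i # q" and y: "y = p @ q"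
    obtain p0 c0 q0 where v: "v = p0 @ c0 # q0" and "s p0 = p" and c0: "sl c0 = One i" and q: "s q0 = q"
      using s_decomp xv x by metis
    then have p0: "p0 = p" using map_sl_Two p by blast
    obtain j where j: "c0 = One j" using sl_One[OF c0] by blast
    have V: "{v'. down r v v' \<and> s v' = y} = {p @ q0}"
    proof (intro equalityI subsetI)
      fix v' assume "v' \<in> {v'. down r v v' \<and> s v' = y}"
      then have dv: "down r v v'" and sv: "s v' = y" by auto
      from dv show "v' \<in> {p @ q0}" unfolding down_def
      proof (elim disjE exE conjE)
        fix p2 i2 q2 assume "\<forall>a\<in>set p2. a = Two" "v = p2 @ One i2 # q2" "v' = p2 @ q2"
        then show ?thesis using leading_unique[of p j q0 p2 i2 q2] v p0 j p by auto
      next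
        fix p2 q2 k assume "v = p2 @ Two # q2" "v' = p2 @ One k # q2"
        then have "length v' = length v" by simp
        moreover have "length y < length v" using y v p0 q by auto
        ultimately show ?thesis using sv by (metis s_len less_irrefl)
      qed
    next
      fix v' assume "v' \<in> {p @ q0}"
      then show "v' \<in> {v'. down r v v' \<and> s v' = y}"
        using v p0 j p y q unfolding down_def by (auto simp: s_two)
    qed
    have cardx: "card (fib r w v (x # y # ps)) = card (fib r w (p @ q0) (y # ps))"
      using fibx V card_fib_Cons[of "{p @ q0}"] by simp
    have sy: "y = s (p @ q0)" using y q p by (simp add: s_two)
    have "h x y = length q0" using h_step1[OF p] x y q[symmetric] by simp
    then have Cx: "C (x # y # ps) = min (length q0) ?C" by (simp only: C.simps)
    have vv: "v = p @ One j # q0" using v p0 j by simp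
    show ?thesis
    proof (cases "?C \<le> length q0")
      case True
      have t1: "take (length v - ?C) v = p @ One j # take (length q0 - ?C) q0"
        using True vv by (simp add: take_pre Suc_diff_le)
      have t2: "take (length (p @ q0) - ?C) (p @ q0) = p @ take (length q0 - ?C) q0"
        using True by (simp add: take_pre)
      have hh: "?C \<le> h w (p @ q0) \<longleftrightarrow> ?C \<le> h w v"
        using True vv by (simp add: h_ge_iff)
      show ?thesis using cardx IH[OF sy] Cx True t1 t2 hh vv e_two[OF p] by simp
    next
      case False
      have e1: "?C \<le> h w (p @ q0) \<longleftrightarrow> take (length q0) (rev w) = rev q0"
        using ext1[OF p _ ] False C1h sy by simp
      have e2: "length q0 \<le> h w v \<longleftrightarrow> take (length q0) (rev w) = rev q0"
        using False C1w vv by (simp add: h_ge_iff)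
      have t1: "take (length v - length q0) v = p @ [One j]" using vv by simp
      have t2: "e (take (length (p @ q0) - ?C) (p @ q0)) = 0"
        using False e_take_two[OF p] by simp
      show ?thesis using cardx IH[OF sy] Cx False t1 t2 e1 e2 vv e_two[OF p] by simp
    qed
  next
    fix p q k assume p: "\<forall>a\<in>set p. a = Two" and x: "x = p @ Two # q" and y: "y = p @ One k # q"
      and k: "1 \<le> k" "k \<le> (1::nat)"
    obtain p0 c0 q0 where v: "v = p0 @ c0 # q0" and "s p0 = p" and c0: "sl c0 = Two" and q: "s q0 = q"
      using s_decomp xv x by metis
    then have p0: "p0 = p" using map_sl_Two p by blast
    have vv: "v = p @ Two # q0" using v p0 c0 sl_Two by simp
    define f where "f = (\<lambda>k. p @ One k # q0)"
    have V: "{v'. down r v v' \<and> s v' = y} = f ` {1..r}"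
    proof (intro equalityI subsetI)
      fix v' assume "v' \<in> {v'. down r v v' \<and> s v' = y}"
      then have dv: "down r v v'" and sv: "s v' = y" by auto
      from dv show "v' \<in> f ` {1..r}" unfolding down_def
      proof (elim disjE exE conjE)
        fix p2 i2 q2 assume "v = p2 @ One i2 # q2" "v' = p2 @ q2"
        then have "length v' < length v" by simp
        moreover have "length y = length v" using y vv q by auto
        ultimately show ?thesis using sv by (metis s_len less_irrefl)
      next
        fix p2 q2 k2 assume p2: "\<forall>a\<in>set p2. a = Two" and v2: "v = p2 @ Two # q2" and v': "v' = p2 @ One k2 # q2"
          and k2: "1 \<le> k2" "k2 \<le> r"
        have "p @ One 1 # q = p2 @ One 1 # s q2" using sv v' y k s_two[OF p2] by simp
        then have "p2 = p" using leading_unique p p2 by metis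
        then have "q2 = q0" using v2 vv by simp
        then show ?thesis using v' \<open>p2 = p\<close> k2 by (auto simp: f_def)
      qed
    next
      fix v' assume "v' \<in> f ` {1..r}"
      then show "v' \<in> {v'. down r v v' \<and> s v' = y}"
        using vv p y q k unfolding down_def f_def by (force simp: s_two)
    qed
    have injf: "inj_on f {1..r}" by (auto simp: f_def inj_on_def)
    have cardx: "card (fib r w v (x # y # ps)) = (\<Sum>k'\<in>{1..r}. card (fib r w (f k') (y # ps)))"
      using fibx V card_fib_Cons[of "f ` {1..r}"] sum.reindex[OF injf] by simp
    have sy: "\<And>k'. y = s (f k')" using y q p k by (simp add: s_two f_def)
    have "h x y = length q0" using h_step2 x y q[symmetric] by simp
    then have Cx: "C (x # y # ps) = min (length q0) ?C" by (simp only: C.simps)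
    show ?thesis
    proof (cases "?C \<le> length q0")
      case True
      let ?X = "e (take (length q0 - ?C) q0)"
      have t1: "\<And>k'. take (length v - ?C) (f k') = p @ One k' # take (length q0 - ?C) q0"
        using True vv by (simp add: take_pre Suc_diff_le f_def)
      have t2: "take (length v - ?C) v = p @ Two # take (length q0 - ?C) q0"
        using True vv by (simp add: take_pre Suc_diff_le)
      have hh: "\<And>k'. ?C \<le> h w (f k') \<longleftrightarrow> ?C \<le> h w v"
        using True vv by (simp add: h_ge_iff f_def)
      have "take (length y - ?C) y = p @ One k # take (length (s q0) - ?C) (s q0)"
        by (rule take_mid) (use y q True in auto)
      then have ty: "e (take (length y - ?C) y) = Suc ?X"
        using e_two[OF p] by (simp add: s_take[symmetric] e_s)
      have lq: "length y = length v" using y vv q by auto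
      have bound: "length w + Suc ?X \<le> length v" using eb ty lq by simp
      have lf: "\<And>k'. length (f k') = length v" using vv by (simp add: f_def)
      have "card (fib r w v (x # y # ps)) =
          (\<Sum>k'\<in>{1..r}. if ?C \<le> h w v then r ^ (length v - length w - Suc ?X) else 0)"
        unfolding cardx using IH[OF sy] hh t1 lf e_two[OF p] by (intro sum.cong) auto
      also have "\<dots> = (if ?C \<le> h w v then r * r ^ (length v - length w - Suc ?X) else 0)" by simp
      also have "\<dots> = (if ?C \<le> h w v then r ^ (length v - length w - ?X) else 0)"
        using bound by (simp add: power_Suc[symmetric] Suc_diff_Suc)
      finally show ?thesis using Cx True t2 e_two[OF p] by simp
    next
      case False
      obtain k0 where k0w: "One k0 \<in> set w" and
        e1: "\<And>k'. ?C \<le> h w (p @ One k' # q0) \<longleftrightarrow> take (length q0) (rev w) = rev q0 \<and> k' = k0"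
        using ext2[OF p, of q0 ?C w 1] False C1h sy[of 1] by (auto simp: f_def)
      have k0: "k0 \<in> {1..r}" using k0w wY by (auto simp: YF_def)
      have e2: "length q0 \<le> h w v \<longleftrightarrow> take (length q0) (rev w) = rev q0"
        using False C1w vv by (simp add: h_ge_iff)
      have t1: "take (length v - length q0) v = p @ [Two]" using vv by simp
      have t2: "\<And>k'. e (take (length v - ?C) (f k')) = 0"
        using False vv e_take_two[OF p] by (simp add: f_def)
      have lf: "\<And>k'. length (f k') = length v" using vv by (simp add: f_def)
      let ?T = "take (length q0) (rev w) = rev q0"
      have "card (fib r w v (x # y # ps)) =
          (\<Sum>k'\<in>{1..r}. if k' = k0 then (if ?T then r ^ (length v - length w) else 0) else 0)"
        unfolding cardx using IH[OF sy] e1 t2 lf by (intro sum.cong) (auto simp: f_def)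
      also have "\<dots> = (if ?T then r ^ (length v - length w) else 0)"
        using k0 by (simp add: sum.delta)
      finally show ?thesis using Cx False t1 e2 e_two[OF p] by simp
    qed
  qed
qed auto

lemma d1_pred:
  assumes lx: "l \<le> length x" and ip: "is_path 1 x y P"
  shows "((\<forall>z\<in>set P. \<exists>q. z = q @ drop (length x - l) x)
      \<and> \<not> (\<exists>c. \<forall>z\<in>set P. \<exists>q. z = q @ [c] @ drop (length x - l) x)) \<longleftrightarrow> C P = l"
proof -
  have ne: "P \<noteq> []" and lP: "last P = x" using ip by (auto simp: is_path_iff)
  define u where "u = drop (length x - l) x"
  have lu: "length u = l" using lx by (simp add: u_def)
  have xu: "last P = take (length x - l) x @ u" using lP by (simp add: u_def)
  have A: "(\<forall>z\<in>set P. \<exists>q. z = q @ u) \<longleftrightarrow> l \<le> C P" using C_suffix[OF ne xu] lu by simp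
  have CPx: "C P \<le> length x" using C_le_last[OF ne] lP by simp
  have "((\<forall>z\<in>set P. \<exists>q. z = q @ u) \<and> \<not> (\<exists>c. \<forall>z\<in>set P. \<exists>q. z = q @ [c] @ u)) \<longleftrightarrow> C P = l"
  proof
    assume H: "(\<forall>z\<in>set P. \<exists>q. z = q @ u) \<and> \<not> (\<exists>c. \<forall>z\<in>set P. \<exists>q. z = q @ [c] @ u)"
    have le: "l \<le> C P" using A H by simp
    show "C P = l"
    proof (rule ccontr)
      assume "C P \<noteq> l"
      then have lt: "l < C P" using le by simp
      define c where "c = x ! (length x - l - 1)"
      have cu: "c # u = drop (length x - l - 1) x"
        unfolding c_def u_def using lt CPx Cons_nth_drop_Suc[of "length x - l - 1" x]
        by (simp add: Suc_diff_Suc)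
      have "last P = take (length x - l - 1) x @ (c # u)" using lP cu by (metis append_take_drop_id)
      then have "\<forall>z\<in>set P. \<exists>q. z = q @ (c # u)" using C_suffix[OF ne] lt lu by simp
      then have "\<exists>c. \<forall>z\<in>set P. \<exists>q. z = q @ [c] @ u" by auto
      then show False using H by blast
    qed
  next
    assume CP: "C P = l"
    have "\<not> (\<exists>c. \<forall>z\<in>set P. \<exists>q. z = q @ [c] @ u)"
    proof
      assume "\<exists>c. \<forall>z\<in>set P. \<exists>q. z = q @ [c] @ u"
      then obtain c where all: "\<forall>z\<in>set P. \<exists>q. z = q @ (c # u)" by auto
      then obtain q where "last P = q @ (c # u)" using last_in_set[OF ne] by blast
      then have "length (c # u) \<le> C P" using C_suffix[OF ne] all by blast
      then show False using CP lu by simp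
    qed
    then show "(\<forall>z\<in>set P. \<exists>q. z = q @ u) \<and> \<not> (\<exists>c. \<forall>z\<in>set P. \<exists>q. z = q @ [c] @ u)"
      using A CP by simp
  qed
  then show ?thesis by (simp add: u_def)
qed

lemma d1_set:
  assumes lx: "l \<le> length x"
  shows "{ps. is_path 1 x y ps \<and> (\<forall>z\<in>set ps. \<exists>q. z = q @ drop (length x - l) x)
      \<and> \<not> (\<exists>c. \<forall>z\<in>set ps. \<exists>q. z = q @ [c] @ drop (length x - l) x)}
    = {P. is_path 1 x y P \<and> C P = l}"
  using d1_pred[OF lx] by blast

theorem mainTheorem6:
  fixes r :: nat and w v :: word
  assumes "1 \<le> r" and "w \<in> YF r" and "v \<in> YF r"
  shows "d r w v = (\<Sum>l = 0..h w v. d1 (s w) (s v) l * r ^ (length v - length w - e (cut v l)))"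
proof -
  define g where "g l = r ^ (length v - length w - e (take (length v - l) v))" for l
  define S where "S = {ps. is_path r w v ps}"
  define S1 where "S1 = {P. is_path 1 (s w) (s v) P}"
  have fS: "finite S" unfolding S_def is_path_iff
    by (rule finite_subset[OF _ finite_paths[of r v]]) blast
  have fS1: "finite S1" unfolding S1_def is_path_iff
    by (rule finite_subset[OF _ finite_paths[of 1 "s v"]]) blast
  have img: "map s ` S \<subseteq> S1"
  proof
    fix P assume "P \<in> map s ` S"
    then obtain ps where "ps \<in> S" and P: "P = map s ps" by blast
    then have "ps \<noteq> []" "hd ps = v" "last ps = w" "chain r ps" unfolding S_def is_path_iff by auto
    then show "P \<in> S1" unfolding S1_def is_path_iff P
      using chain_s[of r ps] by (simp add: hd_map last_map)
  qed
  have "d r w v = card S" by (simp add: d_def S_def)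
  also have "\<dots> = (\<Sum>ps\<in>S. 1)" by simp
  also have "\<dots> = (\<Sum>P\<in>S1. \<Sum>ps\<in>{ps. ps \<in> S \<and> map s ps = P}. 1)"
    by (rule sum.group[OF fS fS1 img, symmetric])
  also have "\<dots> = (\<Sum>P\<in>S1. if C P \<le> h w v then g (C P) else 0)"
  proof (rule sum.cong[OF refl])
    fix P assume P: "P \<in> S1"
    have "{ps. ps \<in> S \<and> map s ps = P} = fib r w v P"
      unfolding S_def fib_def is_path_iff by blast
    moreover have "card (fib r w v P) = (if C P \<le> h w v then g (C P) else 0)"
      using fiber[of 1 P v w r] P assms(2) unfolding S1_def is_path_iff g_def by auto
    ultimately show "(\<Sum>ps\<in>{ps. ps \<in> S \<and> map s ps = P}. 1) = (if C P \<le> h w v then g (C P) else 0)"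
      by simp
  qed
  also have "\<dots> = (\<Sum>P\<in>{P \<in> S1. C P \<le> h w v}. g (C P))"
    by (rule sum.inter_filter[OF fS1, symmetric])
  also have "\<dots> = (\<Sum>l\<in>{0..h w v}. \<Sum>P\<in>{P. P \<in> {P \<in> S1. C P \<le> h w v} \<and> C P = l}. g (C P))"
    by (rule sum.group[symmetric]) (use fS1 in auto)
  also have "\<dots> = (\<Sum>l = 0..h w v. d1 (s w) (s v) l * g l)"
  proof (rule sum.cong[OF refl])
    fix l assume l: "l \<in> {0..h w v}"
    then have ll: "l \<le> length (s w)" using h_le1[of w v] by simp
    have "{P. P \<in> {P \<in> S1. C P \<le> h w v} \<and> C P = l} = {P. is_path 1 (s w) (s v) P \<and> C P = l}"
      using l unfolding S1_def by auto
    also have "\<dots> = {ps. is_path 1 (s w) (s v) ps \<and> (\<forall>z\<in>set ps. \<exists>q. z = q @ drop (length (s w) - l) (s w))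
      \<and> \<not> (\<exists>c. \<forall>z\<in>set ps. \<exists>q. z = q @ [c] @ drop (length (s w) - l) (s w))}"
      using d1_set[OF ll] by simp
    finally have setEq: "{P. P \<in> {P \<in> S1. C P \<le> h w v} \<and> C P = l} = {ps. is_path 1 (s w) (s v) ps \<and> (\<forall>z\<in>set ps. \<exists>q. z = q @ drop (length (s w) - l) (s w))
      \<and> \<not> (\<exists>c. \<forall>z\<in>set ps. \<exists>q. z = q @ [c] @ drop (length (s w) - l) (s w))}" .
    have "(\<Sum>P\<in>{P. P \<in> {P \<in> S1. C P \<le> h w v} \<and> C P = l}. g (C P))
        = (\<Sum>P\<in>{P. P \<in> {P \<in> S1. C P \<le> h w v} \<and> C P = l}. g l)"
      by (rule sum.cong) auto
    also have "\<dots> = card {P. P \<in> {P \<in> S1. C P \<le> h w v} \<and> C P = l} * g l" by simp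
    also have "\<dots> = d1 (s w) (s v) l * g l" unfolding d1_def setEq by simp
    finally show "(\<Sum>P\<in>{P. P \<in> {P \<in> S1. C P \<le> h w v} \<and> C P = l}. g (C P)) = d1 (s w) (s v) l * g l" .
  qed
  finally show ?thesis by (simp add: g_def cut_def)
qed

end
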